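(* Let $n\ge1$, $k>0$, let $F$ be a complex polynomial of degree exactly $n$ having all its zeros in $|z|\le k$, and let $P\in\mathscr P_n$ satisfy $|P(z)|\le|F(z)|$ for $|z|=k$. Then for all $\beta\in\mathbb C$ with $|\beta|\le1$, all $R>r\ge k$ and all $|z|\ge1$, $$\Big|B[P\circ\sigma](z)+\beta\Big(\tfrac{R+k}{k+r}\Big)^nB[P\circ\rho](z)\Big|\le\Big|B[F\circ\sigma](z)+\beta\Big(\tfrac{R+k}{k+r}\Big)^nB[F\circ\rho](z)\Big|.$$ Equality holds for $P=e^{i\gamma}F$, $\gamma\in\mathbb R$.
   Context: For an integer $n\ge1$, $\mathscr P_n$ denotes the set of complex polynomials of degree at most $n$. Fix complex numbers $\lambda_0,\lambda_1,\lambda_2$ such that all zeros of $U(z)=\lambda_0+n\lambda_1 z+\frac{n(n-1)}{2}\lambda_2 z^2$ lie in the half-plane $\{z\in\mathbb C:|z|\le|z-n/2|\}$. The operator $B$ (of the class $\mathcal B_n$) sends $P\in\mathscr P_n$ to $B[P](z)=\lambda_0P(z)+\lambda_1\frac{nz}{2}P'(z)+\lambda_2\left(\frac{nz}{2}\right)^2\frac{P''(z)}{2!}$. For a polynomial $P$ and a map $\rho$, $P\circ\rho$ denotes $z\mapsto P(\rho(z))$, and $B[P\circ\rho](z)$ is $B$ applied to the polynomial $P\circ\rho$, evaluated at $z$. $\sigma(z)=Rz$, $\rho(z)=rz$. *)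

theory Defs
  imports "HOL-Analysis.Analysis" "HOL-Computational_Algebra.Polynomial"
begin

definition B_op :: "nat \<Rightarrow> complex \<Rightarrow> complex \<Rightarrow> complex \<Rightarrow> complex poly \<Rightarrow> complex \<Rightarrow> complex" where
  "B_op n l0 l1 l2 P z =
     l0 * poly P z + l1 * (of_nat n * z / 2) * poly (pderiv P) z
     + l2 * (of_nat n * z / 2)^2 * poly (pderiv (pderiv P)) z / 2"

definition U_poly :: "nat \<Rightarrow> complex \<Rightarrow> complex \<Rightarrow> complex \<Rightarrow> complex \<Rightarrow> complex" where
  "U_poly n l0 l1 l2 z = l0 + of_nat n * l1 * z + of_nat (n * (n - 1)) / 2 * l2 * z^2"

end

theory Submission
  imports Defs "HOL-Computational_Algebra.Fundamental_Theorem_Algebra"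
begin

lemma K1_ident:
  fixes t mu z w :: complex
  shows "2 * Re ((t - mu*w) * cnj (z - w) * (z * cnj t - cnj mu)) =
    (cmod (t - mu*w))^2 * ((cmod z)^2 - 1) + ((cmod t)^2 - (cmod mu)^2) * (cmod (z-w))^2
    + (cmod (t - mu*z))^2 * (1 - (cmod w)^2)"
  unfolding cmod_power2 by (simp add: power2_eq_square algebra_simps)

lemma K1:
  fixes t mu z w :: complex
  assumes z: "cmod z > 1" and w: "cmod w \<le> 1" and t: "cmod t > cmod mu"
  shows "Re ((z * cnj t - cnj mu) * ((t - mu*w)/(z - w))) > 0"
proof -
  have zw: "z \<noteq> w" using z w by auto
  hence pos: "(cmod (z-w))^2 > 0" by simp
  have a: "(cmod (t - mu*w))^2 * ((cmod z)^2 - 1) \<ge> 0"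
    using z by (simp add: abs_square_le_1 one_less_power)
  have b: "((cmod t)^2 - (cmod mu)^2) * (cmod (z-w))^2 > 0"
    using t pos by (simp add: power_strict_mono)
  have c: "(cmod (t - mu*z))^2 * (1 - (cmod w)^2) \<ge> 0"
    using w by (simp add: power_le_one)
  have "Re ((t - mu*w) * cnj (z - w) * (z * cnj t - cnj mu)) > 0"
    using K1_ident[of t mu w z] a b c by linarith
  moreover have "(z * cnj t - cnj mu) * ((t - mu*w)/(z - w)) =
      ((t - mu*w) * cnj (z - w) * (z * cnj t - cnj mu)) / complex_of_real ((cmod (z-w))^2)"
    by (subst complex_div_cnj) (simp add: algebra_simps)
  ultimately show ?thesis using pos by (simp add: Re_divide_of_real)
qed

lemma K2:
  fixes t mu w :: complex
  assumes w: "cmod w \<le> 1" and t: "cmod t > cmod mu"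
  shows "Re (cnj t * (t - mu*w)) > 0"
proof -
  have "Re (cnj t * (mu * w)) \<le> cmod (cnj t * (mu*w))" by (rule complex_Re_le_cmod)
  also have "\<dots> = cmod t * cmod mu * cmod w" by (simp add: norm_mult)
  also have "\<dots> \<le> cmod t * cmod mu" using w by (simp add: mult_left_le)
  also have "\<dots> < cmod t * cmod t"
  proof -
    have "cmod t > 0" using t norm_ge_zero[of mu] by linarith
    thus ?thesis using t by (simp add: mult_strict_left_mono)
  qed
  finally have "Re (cnj t * (mu * w)) < (cmod t)^2" by (simp add: power2_eq_square)
  moreover have "Re (cnj t * t) = (cmod t)^2" unfolding cmod_power2 by (simp add: power2_eq_square)
  ultimately show ?thesis by (simp add: algebra_simps)
qed

definition Eop :: "complex \<Rightarrow> complex \<Rightarrow> complex poly \<Rightarrow> complex poly" where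
  "Eop mu t f = smult (mu * of_nat (degree f)) f + [:t, -mu:] * pderiv f"

lemma Eop_factor:
  assumes "h \<noteq> 0"
  shows "Eop mu t ([:-w,1:] * h) = [:-w,1:] * Eop mu t h + smult (t - mu*w) h"
proof -
  have "degree ([:-w,1:] * h) = degree [:-w,1:] + degree h" by (rule degree_mult_eq) (use assms in auto)
  hence d: "degree ([:-w,1:] * h) = Suc (degree h)" by simp
  show ?thesis
    unfolding Eop_def d
    apply (rule poly_eq_poly_eq_iff[THEN iffD1])
    apply (rule ext)
    apply (simp add: pderiv_diff pderiv_smult pderiv_add pderiv_pCons algebra_simps)
    done
qed

lemma Lag:
  assumes t: "cmod t > cmod mu"
  shows "degree f = m \<Longrightarrow> f \<noteq> 0 \<Longrightarrow> (\<forall>w. poly f w = 0 \<longrightarrow> cmod w \<le> 1) \<Longrightarrow>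
    degree (Eop mu t f) \<le> m - 1 \<and>
    (m = 0 \<longrightarrow> Eop mu t f = 0) \<and>
    (m \<ge> 1 \<longrightarrow> Re (cnj t * (coeff (Eop mu t f) (m-1) / lead_coeff f)) > 0) \<and>
    (\<forall>z. cmod z > 1 \<longrightarrow> poly f z \<noteq> 0 \<and>
       (m \<ge> 1 \<longrightarrow> Re ((z * cnj t - cnj mu) * (poly (Eop mu t f) z / poly f z)) > 0))"
proof (induction m arbitrary: f)
  case 0
  have "pderiv f = 0" using 0(1) pderiv_eq_0_iff by blast
  hence E: "Eop mu t f = 0" using 0 by (simp add: Eop_def)
  obtain a where fa: "f = pCons a 0" using degree_eq_zeroE[OF 0(1)] by blast
  have "a \<noteq> 0" using 0(2) fa by auto
  hence "poly f z \<noteq> 0" for z using fa by simp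
  thus ?case using E by simp
next
  case (Suc m)
  have "\<not> constant (poly f)" using Suc(2) by (simp add: constant_degree)
  then obtain w where w0: "poly f w = 0" using fundamental_theorem_of_algebra by blast
  hence wle: "cmod w \<le> 1" using Suc(4) by blast
  from w0 obtain h where fh: "f = [:-w,1:] * h" using poly_eq_0_iff_dvd by (metis dvdE)
  have h0: "h \<noteq> 0" using Suc(3) fh by auto
  have "degree f = degree [:-w,1:] + degree h" unfolding fh by (rule degree_mult_eq) (use h0 in auto)
  hence dh: "degree h = m" using Suc(2) by simp
  have rh: "\<forall>x. poly h x = 0 \<longrightarrow> cmod x \<le> 1" using Suc(4) fh by auto
  note IH = Suc.IH[OF dh h0 rh]
  define Eh where "Eh = Eop mu t h"
  have E: "Eop mu t f = [:-w,1:] * Eh + smult (t - mu*w) h"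
    unfolding fh Eh_def by (rule Eop_factor[OF h0])
  have lf: "lead_coeff f = lead_coeff h" unfolding fh lead_coeff_mult by simp
  have lh0: "lead_coeff h \<noteq> 0" using h0 by simp
  have degEh: "degree Eh \<le> m - 1" using IH Eh_def by simp
  have part1: "degree (Eop mu t f) \<le> Suc m - 1"
  proof (cases "m = 0")
    case True
    hence "Eh = 0" using IH Eh_def by simp
    thus ?thesis unfolding E using dh True by simp
  next
    case False
    have "degree ([:-w,1:] * Eh) \<le> degree [:-w,1:] + degree Eh" by (rule degree_mult_le)
    also have "\<dots> \<le> m" using degEh False by simp
    finally have "degree ([:-w,1:] * Eh) \<le> m" .
    moreover have "degree (smult (t - mu*w) h) \<le> m" using dh by simp
    ultimately show ?thesis unfolding E by (simp add: degree_add_le)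
  qed
  have part2: "Re (cnj t * (coeff (Eop mu t f) (Suc m - 1) / lead_coeff f)) > 0"
  proof (cases "m = 0")
    case True
    hence "Eh = 0" using IH Eh_def by simp
    hence "coeff (Eop mu t f) (Suc m - 1) / lead_coeff f = t - mu*w"
      unfolding E lf using True dh lh0 by simp
    thus ?thesis using K2[OF wle t] by simp
  next
    case False
    have c0: "coeff Eh m = 0" using degEh False by (simp add: coeff_eq_0)
    have "coeff ([:-w,1:] * Eh) m = coeff Eh (m - 1)"
      using c0 False by (simp add: coeff_pCons split: nat.splits)
    hence "coeff (Eop mu t f) (Suc m - 1) / lead_coeff f = coeff Eh (m-1) / lead_coeff h + (t - mu*w)"
      unfolding E lf using dh lh0 by (simp add: field_simps)
    moreover have "Re (cnj t * (coeff Eh (m-1) / lead_coeff h)) > 0" using IH False Eh_def by simp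
    ultimately show ?thesis using K2[OF wle t] by (simp add: distrib_left)
  qed
  have part3: "poly f z \<noteq> 0 \<and> Re ((z * cnj t - cnj mu) * (poly (Eop mu t f) z / poly f z)) > 0"
    if z: "cmod z > 1" for z
  proof -
    have zw: "z - w \<noteq> 0" using z wle by auto
    have hz: "poly h z \<noteq> 0" using IH z by blast
    have pf: "poly f z \<noteq> 0" using zw hz fh by simp
    have ratio: "poly (Eop mu t f) z / poly f z = poly Eh z / poly h z + (t - mu*w) / (z - w)"
    proof -
      have e1: "poly (Eop mu t f) z = (z-w)*poly Eh z + (t-mu*w)*poly h z" by (simp add: E algebra_simps)
      have e2: "poly f z = (z-w)*poly h z" by (simp add: fh algebra_simps)
      show ?thesis unfolding e1 e2 using zw hz by (simp add: field_simps)
    qed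
    have k1: "Re ((z * cnj t - cnj mu) * ((t - mu*w)/(z - w))) > 0" by (rule K1[OF z wle t])
    have "Re ((z * cnj t - cnj mu) * (poly Eh z / poly h z)) \<ge> 0"
    proof (cases "m = 0")
      case True
      hence "Eh = 0" using IH Eh_def by simp
      thus ?thesis by simp
    next
      case False
      thus ?thesis using IH z Eh_def by (simp add: less_imp_le)
    qed
    thus ?thesis using pf k1 ratio by (simp add: distrib_left)
  qed
  show ?case using part1 part2 part3 by auto
qed

lemma Lag_step:
  assumes t: "cmod t > cmod mu" and d: "degree f = m" and m: "m \<ge> 1"
    and r: "\<forall>w. poly f w = 0 \<longrightarrow> cmod w \<le> 1"
  shows "degree (Eop mu t f) = m - 1 \<and> (\<forall>z. cmod z > 1 \<longrightarrow> poly (Eop mu t f) z \<noteq> 0)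
         \<and> (\<forall>w. poly (Eop mu t f) w = 0 \<longrightarrow> cmod w \<le> 1)"
proof -
  have f0: "f \<noteq> 0" using d m by auto
  note L = Lag[OF t d f0 r]
  have "coeff (Eop mu t f) (m-1) \<noteq> 0"
  proof
    assume "coeff (Eop mu t f) (m - 1) = 0"
    thus False using L m by simp
  qed
  hence "degree (Eop mu t f) \<ge> m - 1" by (rule le_degree)
  hence deg: "degree (Eop mu t f) = m - 1" using L by simp
  have nz: "poly (Eop mu t f) z \<noteq> 0" if "cmod z > 1" for z
  proof
    assume "poly (Eop mu t f) z = 0"
    thus False using L m that by auto
  qed
  show ?thesis using deg nz by (meson not_le)
qed

lemma quad_factor:
  fixes a0 a1 a2 h :: complex
  assumes R: "\<forall>y. a0 + a1*y + a2*y^2 = 0 \<longrightarrow> cmod y \<le> cmod (y - h)"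
    and nz: "\<not> (a0 = 0 \<and> a1 = 0 \<and> a2 = 0)"
  shows "\<exists>C c1 d1 c2 d2. C \<noteq> 0 \<and> (c1 \<noteq> 0 \<or> d1 \<noteq> 0) \<and> (c2 \<noteq> 0 \<or> d2 \<noteq> 0)
     \<and> cmod c1 \<le> cmod (c1 + h*d1) \<and> cmod c2 \<le> cmod (c2 + h*d2)
     \<and> a0 = C*c1*c2 \<and> a1 = C*(c1*d2 + c2*d1) \<and> a2 = C*d1*d2"
proof (cases "a2 = 0")
  case False
  define s where "s = csqrt (a1^2 - 4*a2*a0)"
  have s2: "s^2 = a1^2 - 4*a2*a0" unfolding s_def by simp
  define y1 where "y1 = (-a1 + s)/(2*a2)"
  define y2 where "y2 = (-a1 - s)/(2*a2)"
  have e1: "a1 = a2 * (- y1 - y2)" unfolding y1_def y2_def using False by (simp add: field_simps)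
  have e0: "a0 = a2 * y1 * y2"
  proof -
    have "a2 * y1 * y2 = (a1^2 - s^2)/(4*a2)" unfolding y1_def y2_def using False
      by (simp add: field_simps power2_eq_square)
    also have "\<dots> = a0" using False unfolding s2 by (simp add: field_simps)
    finally show ?thesis by simp
  qed
  have fac: "a0 + a1*y + a2*y^2 = a2 * (y - y1) * (y - y2)" for y
    by (subst e0, subst e1) (simp add: algebra_simps power2_eq_square)
  have r1: "cmod y1 \<le> cmod (y1 - h)" using R fac[of y1] by simp
  have r2: "cmod y2 \<le> cmod (y2 - h)" using R fac[of y2] by simp
  have m1: "-y1 + h*1 = -(y1 - h)" "-y2 + h*1 = -(y2 - h)" by simp_all
  have A: "cmod (-y1) \<le> cmod (-y1 + h*1)" using r1 unfolding m1 norm_minus_cancel .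
  have B: "cmod (-y2) \<le> cmod (-y2 + h*1)" using r2 unfolding m1 norm_minus_cancel .
  have C: "a0 = a2*(-y1)*(-y2)" using e0 by simp
  have D: "a1 = a2*((-y1)*1 + (-y2)*1)" using e1 by (simp add: algebra_simps)
  have E: "a2 = a2*1*1" by simp
  have F: "(-y1 \<noteq> 0 \<or> (1::complex) \<noteq> 0)" "(-y2 \<noteq> 0 \<or> (1::complex) \<noteq> 0)" by simp_all
  show ?thesis
    apply (rule exI[of _ a2], rule exI[of _ "-y1"], rule exI[of _ 1], rule exI[of _ "-y2"], rule exI[of _ 1])
    using False A B C D E F by (intro conjI)
next
  case a2: True
  show ?thesis
  proof (cases "a1 = 0")
    case True
    hence "a0 \<noteq> 0" using nz a2 by simp
    show ?thesis
      apply (rule exI[of _ a0], rule exI[of _ 1], rule exI[of _ 0], rule exI[of _ 1], rule exI[of _ 0])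
      using \<open>a0 \<noteq> 0\<close> a2 True by simp
  next
    case False
    define y1 where "y1 = - a0 / a1"
    have "a0 + a1*y1 + a2*y1^2 = 0" unfolding y1_def using False a2 by simp
    hence r1: "cmod y1 \<le> cmod (y1 - h)" using R by blast
    have m1: "-y1 + h*1 = -(y1 - h)" by simp
    have A: "cmod (-y1) \<le> cmod (-y1 + h*1)" using r1 unfolding m1 norm_minus_cancel .
    have C: "a0 = a1 * (-y1) * 1" unfolding y1_def using False by simp
    have D: "a1 = a1 * ((-y1)*0 + 1*1)" by simp
    have E: "a2 = a1 * 1 * 0" using a2 by simp
    have F: "(-y1 \<noteq> 0 \<or> (1::complex) \<noteq> 0)" "((1::complex) \<noteq> 0 \<or> (0::complex) \<noteq> 0)" by simp_all
    have G: "cmod (1::complex) \<le> cmod (1 + h*0)" by simp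
    show ?thesis
      apply (rule exI[of _ a1], rule exI[of _ "-y1"], rule exI[of _ 1], rule exI[of _ 1], rule exI[of _ 0])
      using False A C D E F G by (intro conjI)
  qed
qed

lemma Eop2_eval:
  assumes df: "degree f = n" and n: "n \<ge> 1" and dg: "degree (Eop mu1 t1 f) = n - 1"
  shows "poly (Eop mu2 t2 (Eop mu1 t1 f)) z = mu1*mu2* of_nat n*(of_nat n - 1) * poly f z
      + (of_nat n - 1)*(mu2*(t1 - mu1*z) + mu1*(t2 - mu2*z)) * poly (pderiv f) z
      + (t1 - mu1*z)*(t2 - mu2*z) * poly (pderiv (pderiv f)) z"
proof -
  have nn: "(of_nat (n - 1) :: complex) = of_nat n - 1" using n by (simp add: of_nat_diff)
  have g: "Eop mu1 t1 f = smult (mu1 * of_nat n) f + [:t1, -mu1:] * pderiv f"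
    unfolding Eop_def df ..
  have "Eop mu2 t2 (Eop mu1 t1 f) = smult (mu2 * (of_nat n - 1)) (Eop mu1 t1 f)
         + [:t2, -mu2:] * pderiv (Eop mu1 t1 f)"
    unfolding Eop_def[of mu2 t2] dg nn ..
  also have "\<dots> = smult (mu2 * (of_nat n - 1)) (smult (mu1 * of_nat n) f + [:t1, -mu1:] * pderiv f)
         + [:t2, -mu2:] * pderiv (smult (mu1 * of_nat n) f + [:t1, -mu1:] * pderiv f)"
    unfolding g ..
  finally have e: "Eop mu2 t2 (Eop mu1 t1 f) = \<dots>" .
  show ?thesis unfolding e
    by (simp add: pderiv_add pderiv_smult pderiv_mult pderiv_pCons pderiv_minus algebra_simps)
qed

lemma good_factor:
  fixes c d z0 :: complex
  assumes n: "n \<ge> 1" and cd: "c \<noteq> 0 \<or> d \<noteq> 0" and g: "cmod c \<le> cmod (c + of_nat n / 2 * d)"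
    and z0: "cmod z0 > 1"
  shows "cmod ((c / of_nat n + d / 2) * z0) > cmod (c / of_nat n)"
proof -
  define T where "T = c + of_nat n / 2 * d"
  have nz: "(of_nat n :: complex) \<noteq> 0" using n by simp
  have eq: "c / of_nat n + d / 2 = T / of_nat n" unfolding T_def using nz by (simp add: field_simps)
  have T0: "T \<noteq> 0"
  proof
    assume "T = 0"
    hence "c = 0" using g T_def by simp
    hence "d = 0" using \<open>T = 0\<close> T_def n by simp
    thus False using cd \<open>c = 0\<close> by simp
  qed
  have "cmod T < cmod T * cmod z0" using T0 z0 by simp
  hence "cmod c < cmod T * cmod z0" using g T_def by simp
  thus ?thesis unfolding eq using n by (simp add: norm_mult norm_divide divide_strict_right_mono)
qed

lemma B_nonzero:
  assumes n: "n \<ge> 1"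
    and U: "\<forall>z. U_poly n l0 l1 l2 z = 0 \<longrightarrow> cmod z \<le> cmod (z - of_nat n / 2)"
    and df: "degree f = n" and rf: "\<forall>w. poly f w = 0 \<longrightarrow> cmod w \<le> 1"
    and z0: "cmod z0 > 1"
  shows "B_op n l0 l1 l2 f z0 \<noteq> 0"
proof (cases "n = 1")
  case True
  have Ueq: "U_poly n l0 l1 l2 z = l0 + l1 * z" for z using True by (simp add: U_poly_def)
  define tau where "tau = l0 + l1 / 2"
  have tz: "cmod (tau * z0) > cmod l0"
  proof (cases "l1 = 0")
    case True
    have "l0 \<noteq> 0"
    proof
      assume "l0 = 0"
      hence "U_poly n l0 l1 l2 (1/2) = 0" using Ueq True by simp
      hence "cmod (1/2 :: complex) \<le> cmod (1/2 - of_nat n / 2 :: complex)" using U by blast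
      thus False using \<open>n = 1\<close> by simp
    qed
    thus ?thesis using z0 True unfolding tau_def by (simp add: norm_mult)
  next
    case False
    have "U_poly n l0 l1 l2 (- l0 / l1) = 0" using Ueq False by simp
    hence "cmod (- l0 / l1) \<le> cmod (- l0 / l1 - of_nat n / 2)" using U by blast
    moreover have "- l0 / l1 - of_nat n / 2 = - ((l0 + l1/2) / l1)" using False \<open>n = 1\<close>
      by (simp add: field_simps)
    ultimately have "cmod (l0 / l1) \<le> cmod ((l0 + l1/2) / l1)"
      by (metis norm_minus_cancel minus_divide_left)
    hence g: "cmod l0 \<le> cmod tau" unfolding tau_def using False
      by (simp add: norm_divide divide_le_cancel)
    have "tau \<noteq> 0"
    proof
      assume "tau = 0"
      hence "l0 = 0" using g by simp
      thus False using \<open>tau = 0\<close> False unfolding tau_def by simp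
    qed
    hence "cmod tau < cmod tau * cmod z0" using z0 by simp
    thus ?thesis using g by (simp add: norm_mult)
  qed
  have dd: "pderiv (pderiv f) = 0" using df True by (simp add: pderiv_eq_0_iff degree_pderiv)
  have "poly (Eop l0 (tau * z0) f) z0 \<noteq> 0" using Lag_step[OF tz df] n rf z0 by blast
  moreover have "poly (Eop l0 (tau * z0) f) z0 = B_op n l0 l1 l2 f z0"
    unfolding Eop_def B_op_def df dd tau_def using True by (simp add: algebra_simps)
  ultimately show ?thesis by simp
next
  case False
  hence n2: "n \<ge> 2" using n by simp
  define N :: complex where "N = of_nat n"
  have N0: "N \<noteq> 0" and N1: "N - 1 \<noteq> 0" using n2 unfolding N_def by auto
  have Uf: "U_poly n l0 l1 l2 z = l0 + (N*l1)*z + (of_nat (n*(n-1))/2*l2)*z^2" for z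
    unfolding U_poly_def N_def by (simp add: algebra_simps)
  have R: "\<forall>y. l0 + (N*l1)*y + (of_nat (n*(n-1))/2*l2)*y^2 = 0 \<longrightarrow> cmod y \<le> cmod (y - N/2)"
    using U unfolding Uf N_def by simp
  have nz: "\<not> (l0 = 0 \<and> N*l1 = 0 \<and> of_nat (n*(n-1))/2*l2 = 0)"
  proof
    assume a: "l0 = 0 \<and> N*l1 = 0 \<and> of_nat (n*(n-1))/2*l2 = 0"
    have "l0 + (N*l1)*(N/2) + (of_nat (n*(n-1))/2*l2)*(N/2)^2 = 0"
      using a by (simp only: mult_zero_left add_0)
    hence "cmod (N/2) \<le> cmod (N/2 - N/2)" using R by blast
    thus False using N0 by simp
  qed
  obtain C c1 d1 c2 d2 where C0: "C \<noteq> 0" and cd1: "c1 \<noteq> 0 \<or> d1 \<noteq> 0" and cd2: "c2 \<noteq> 0 \<or> d2 \<noteq> 0"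
     and g1: "cmod c1 \<le> cmod (c1 + N/2*d1)" and g2: "cmod c2 \<le> cmod (c2 + N/2*d2)"
     and e0: "l0 = C*c1*c2" and e1: "N*l1 = C*(c1*d2 + c2*d1)" and e2: "of_nat (n*(n-1))/2*l2 = C*d1*d2"
    using quad_factor[OF R nz] by blast
  define mu1 where "mu1 = c1 / N"
  define mu2 where "mu2 = c2 / N"
  define t1 where "t1 = (c1 / N + d1 / 2) * z0"
  define t2 where "t2 = (c2 / N + d2 / 2) * z0"
  have tm1: "cmod t1 > cmod mu1" unfolding t1_def mu1_def N_def
    using good_factor[OF n cd1 _ z0] g1 N_def by simp
  have tm2: "cmod t2 > cmod mu2" unfolding t2_def mu2_def N_def
    using good_factor[OF n cd2 _ z0] g2 N_def by simp
  note S1 = Lag_step[OF tm1 df n rf]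
  have n1: "n - 1 \<ge> 1" using n2 by simp
  have S2: "poly (Eop mu2 t2 (Eop mu1 t1 f)) z0 \<noteq> 0"
    using Lag_step[OF tm2 _ n1] S1 z0 by blast
  have ev: "poly (Eop mu2 t2 (Eop mu1 t1 f)) z0 = mu1*mu2*N*(N - 1) * poly f z0
      + (N - 1)*(mu2*(t1 - mu1*z0) + mu1*(t2 - mu2*z0)) * poly (pderiv f) z0
      + (t1 - mu1*z0)*(t2 - mu2*z0) * poly (pderiv (pderiv f)) z0"
    using Eop2_eval[OF df n] S1 unfolding N_def by blast
  have nn: "(of_nat (n*(n-1)) :: complex) = N * (N - 1)" unfolding N_def using n by (simp add: of_nat_diff)
  have l1e: "l1 = C*(c1*d2 + c2*d1) / N" using e1 N0 by (simp add: field_simps)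
  have l2e: "l2 = 2 * C*d1*d2 / (N * (N - 1))" using e2 N0 N1 unfolding nn by (simp add: field_simps)
  have "(N - 1) * B_op n l0 l1 l2 f z0 = C * N * (mu1*mu2*N*(N - 1) * poly f z0
      + (N - 1)*(mu2*(t1 - mu1*z0) + mu1*(t2 - mu2*z0)) * poly (pderiv f) z0
      + (t1 - mu1*z0)*(t2 - mu2*z0) * poly (pderiv (pderiv f)) z0)"
    unfolding B_op_def N_def[symmetric] l1e l2e e0 mu1_def mu2_def t1_def t2_def
    using N0 N1 by (simp add: field_simps power2_eq_square)
  hence "(N - 1) * B_op n l0 l1 l2 f z0 = C * N * poly (Eop mu2 t2 (Eop mu1 t1 f)) z0"
    unfolding ev .
  thus ?thesis using S2 C0 N0 N1 by auto
qed

lemma real_ineq: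
  fixes k r R s q X :: real
  assumes k: "k > 0" and r: "r \<ge> k" and R: "R > r" and s: "s > 1" and q0: "q \<ge> 0" and qk: "q \<le> k"
    and X: "X \<ge> - (s* q)"
  shows "(k+r)^2 * (R^2* s^2 - 2*R*X + q^2) > (R+k)^2 * (r^2* s^2 - 2*r*X + q^2)"
proof -
  define A where "A = 2*R*r + R*k + r*k"
  define E where "E = k*A* s^2 + 2*(R*r - k^2)*X - (R+r+2*k)* q^2"
  have id: "(k+r)^2 * (R^2* s^2 - 2*R*X + q^2) - (R+k)^2 * (r^2* s^2 - 2*r*X + q^2) = (R - r) * E"
    unfolding E_def A_def by (simp add: algebra_simps power2_eq_square)
  have Rr: "R*r - k^2 \<ge> 0"
  proof -
    have "k*k \<le> R*r" using k r R by (intro mult_mono) auto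
    thus ?thesis by (simp add: power2_eq_square)
  qed
  have e1: "2*(R*r - k^2)*X \<ge> 2*(R*r - k^2)*(-(s* q))" using Rr X by (intro mult_left_mono) auto
  have sq: "s* q \<le> s*k" using s qk by (intro mult_left_mono) auto
  have e2: "2*(R*r - k^2)*(-(s* q)) \<ge> 2*(R*r - k^2)*(-(s*k))" using Rr sq by (intro mult_left_mono) auto
  have q2: "q^2 \<le> k^2" using q0 qk by (simp add: power_mono)
  have e3: "(R+r+2*k)* q^2 \<le> (R+r+2*k)*k^2" using q2 k r R by (intro mult_left_mono) auto
  have L1: "E \<ge> k*A* s^2 - 2*(R*r - k^2)*(s*k) - (R+r+2*k)*k^2" unfolding E_def using e1 e2 e3 by linarith
  have L2: "k*A* s^2 - 2*(R*r - k^2)*(s*k) - (R+r+2*k)*k^2 = k*((s-1)*(A* s + k*(R+r+2*k)))"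
    unfolding A_def by (simp add: algebra_simps power2_eq_square)
  have L3: "k*((s-1)*(A* s + k*(R+r+2*k))) > 0"
  proof -
    have "A > 0" unfolding A_def using k r R by (simp add: add_pos_pos)
    hence "A* s + k*(R+r+2*k) > 0" using s k r R by (simp add: add_pos_pos)
    thus ?thesis using k s by simp
  qed
  have "E > 0" using L1 L2 L3 by linarith
  hence "(R - r) * E > 0" using R by simp
  thus ?thesis using id by linarith
qed

lemma fac_ineq:
  fixes z w :: complex and k r R :: real
  assumes k: "k > 0" and r: "r \<ge> k" and R: "R > r" and z: "cmod z > 1" and w: "cmod w \<le> k"
  shows "(R + k) * cmod (complex_of_real r * z - w) < (k + r) * cmod (complex_of_real R * z - w)"
proof -
  have ex: "(cmod (complex_of_real a * z - w))^2 = a^2*(cmod z)^2 - 2*a*Re (z * cnj w) + (cmod w)^2" for a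
    unfolding cmod_power2 by (simp add: algebra_simps power2_eq_square)
  have X: "Re (z * cnj w) \<ge> - (cmod z * cmod w)"
  proof -
    have "\<bar>Re (z * cnj w)\<bar> \<le> cmod (z * cnj w)" by (rule abs_Re_le_cmod)
    thus ?thesis by (simp add: norm_mult)
  qed
  have "(k+r)^2 * (R^2*(cmod z)^2 - 2*R*Re (z * cnj w) + (cmod w)^2) >
        (R+k)^2 * (r^2*(cmod z)^2 - 2*r*Re (z * cnj w) + (cmod w)^2)"
    by (rule real_ineq[OF k r R z norm_ge_zero w X])
  hence "((R + k) * cmod (complex_of_real r * z - w))^2 < ((k + r) * cmod (complex_of_real R * z - w))^2"
    unfolding power_mult_distrib ex by simp
  moreover have "(k + r) * cmod (complex_of_real R * z - w) \<ge> 0" using k r by simp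
  ultimately show ?thesis by (rule power2_less_imp_less)
qed

lemma prod_ineq:
  fixes z :: complex and k r R :: real
  assumes k: "k > 0" and r: "r \<ge> k" and R: "R > r" and z: "cmod z > 1"
  shows "degree H = m \<Longrightarrow> H \<noteq> 0 \<Longrightarrow> (\<forall>w. poly H w = 0 \<longrightarrow> cmod w \<le> k) \<Longrightarrow>
     (R+k)^m * cmod (poly H (complex_of_real r * z)) \<le> (k+r)^m * cmod (poly H (complex_of_real R * z))
     \<and> (m \<ge> 1 \<longrightarrow> (R+k)^m * cmod (poly H (complex_of_real r * z)) < (k+r)^m * cmod (poly H (complex_of_real R * z)))
     \<and> poly H (complex_of_real R * z) \<noteq> 0"
proof (induction m arbitrary: H)
  case 0
  obtain a where fa: "H = pCons a 0" using degree_eq_zeroE[OF 0(1)] by blast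
  have "a \<noteq> 0" using 0(2) fa by auto
  thus ?case using fa by simp
next
  case (Suc m)
  have "\<not> constant (poly H)" using Suc(2) by (simp add: constant_degree)
  then obtain w where w0: "poly H w = 0" using fundamental_theorem_of_algebra by blast
  hence wle: "cmod w \<le> k" using Suc(4) by blast
  from w0 obtain h where fh: "H = [:-w,1:] * h" using poly_eq_0_iff_dvd by (metis dvdE)
  have h0: "h \<noteq> 0" using Suc(3) fh by auto
  have "degree H = degree [:-w,1:] + degree h" unfolding fh by (rule degree_mult_eq) (use h0 in auto)
  hence dh: "degree h = m" using Suc(2) by simp
  have rh: "\<forall>x. poly h x = 0 \<longrightarrow> cmod x \<le> k" using Suc(4) fh by auto
  note IH = Suc.IH[OF dh h0 rh]
  have F: "(R + k) * cmod (complex_of_real r * z - w) < (k + r) * cmod (complex_of_real R * z - w)"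
    by (rule fac_ineq[OF k r R z wle])
  have pH: "poly H x = (x - w) * poly h x" for x unfolding fh by (simp add: algebra_simps)
  have Rz: "complex_of_real R * z - w \<noteq> 0"
  proof
    assume "complex_of_real R * z - w = 0"
    hence "cmod (complex_of_real R * z) = cmod w" by simp
    moreover have "cmod (complex_of_real R * z) > k"
    proof -
      have "cmod (complex_of_real R * z) = R * cmod z" using R r k by (simp add: norm_mult)
      also have "\<dots> > R" using z R r k by simp
      finally show ?thesis using R r by simp
    qed
    ultimately show False using wle by simp
  qed
  define a where "a = (R + k) * cmod (complex_of_real r * z - w)"
  define b where "b = (k + r) * cmod (complex_of_real R * z - w)"
  define c where "c = (R+k)^m * cmod (poly h (complex_of_real r * z))"
  define d where "d = (k+r)^m * cmod (poly h (complex_of_real R * z))"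
  have ab: "a < b" using F a_def b_def by simp
  have cd: "c \<le> d" using IH c_def d_def by simp
  have a0: "a \<ge> 0" using a_def R r k by simp
  have dpos: "d > 0" using IH d_def k r by simp
  have "a * c \<le> a * d" by (rule mult_left_mono[OF cd a0])
  also have "\<dots> < b * d" using ab dpos by simp
  finally have lt: "a * c < b * d" .
  have e1: "(R+k)^Suc m * cmod (poly H (complex_of_real r * z)) = a * c"
    unfolding pH a_def c_def norm_mult by (simp add: mult_ac)
  have e2: "(k+r)^Suc m * cmod (poly H (complex_of_real R * z)) = b * d"
    unfolding pH b_def d_def norm_mult by (simp add: mult_ac)
  have "poly H (complex_of_real R * z) \<noteq> 0" unfolding pH using Rz IH by simp
  thus ?case using lt e1 e2 by simp
qed

definition Gop :: "real \<Rightarrow> real \<Rightarrow> complex \<Rightarrow> complex poly \<Rightarrow> complex poly" where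
  "Gop R r bc H = H \<circ>\<^sub>p [:0, complex_of_real R:] + smult bc (H \<circ>\<^sub>p [:0, complex_of_real r:])"

lemma poly_Gop: "poly (Gop R r bc H) z = poly H (complex_of_real R * z) + bc * poly H (complex_of_real r * z)"
  unfolding Gop_def by (simp add: poly_pcompose mult.commute)

lemma G_lemma:
  fixes k r R :: real and \<beta> :: complex
  assumes k: "k > 0" and r: "r \<ge> k" and R: "R > r" and b: "cmod \<beta> \<le> 1" and n: "n \<ge> 1"
    and dH: "degree H = n" and rH: "\<forall>w. poly H w = 0 \<longrightarrow> cmod w \<le> k"
  shows "degree (Gop R r (\<beta> * complex_of_real (((R+k)/(k+r))^n)) H) = n \<and>
     (\<forall>z. cmod z > 1 \<longrightarrow> poly (Gop R r (\<beta> * complex_of_real (((R+k)/(k+r))^n)) H) z \<noteq> 0)"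
proof -
  define c where "c = ((R+k)/(k+r))^n"
  have cpos: "c > 0" unfolding c_def using k r R by simp
  have H0: "H \<noteq> 0" using dH n by auto
  have nz: "poly (Gop R r (\<beta> * complex_of_real c) H) z \<noteq> 0" if z: "cmod z > 1" for z
  proof -
    note P = prod_ineq[OF k r R z dH H0 rH]
    have "(R+k)^n * cmod (poly H (complex_of_real r * z)) < (k+r)^n * cmod (poly H (complex_of_real R * z))"
      using P n by blast
    hence lt: "c * cmod (poly H (complex_of_real r * z)) < cmod (poly H (complex_of_real R * z))"
      unfolding c_def using k r by (simp add: power_divide field_simps)
    have "cmod (\<beta> * complex_of_real c * poly H (complex_of_real r * z)) \<le> c * cmod (poly H (complex_of_real r * z))"
    proof -
      have "cmod (\<beta> * complex_of_real c * poly H (complex_of_real r * z)) = cmod \<beta> * (c * cmod (poly H (complex_of_real r * z)))"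
        using cpos by (simp add: norm_mult)
      also have "\<dots> \<le> 1 * (c * cmod (poly H (complex_of_real r * z)))"
        using b cpos by (intro mult_right_mono) auto
      finally show ?thesis by simp
    qed
    hence "cmod (\<beta> * complex_of_real c * poly H (complex_of_real r * z)) < cmod (poly H (complex_of_real R * z))"
      using lt by linarith
    thus ?thesis unfolding poly_Gop
      by (metis add.commute add_eq_0_iff norm_minus_cancel order_less_irrefl)
  qed
  have dle: "degree (Gop R r (\<beta> * complex_of_real c) H) \<le> n"
    unfolding Gop_def using dH
    by (intro degree_add_le) (simp_all add: degree_pcompose)
  have co: "coeff (Gop R r (\<beta> * complex_of_real c) H) n =
      lead_coeff H * (complex_of_real R ^ n + \<beta> * complex_of_real c * complex_of_real r ^ n)"
    unfolding Gop_def using dH by (simp add: coeff_pcompose_linear algebra_simps)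
  have "cmod (\<beta> * complex_of_real c * complex_of_real r ^ n) < cmod (complex_of_real R ^ n)"
  proof -
    have "cmod (\<beta> * complex_of_real c * complex_of_real r ^ n) = cmod \<beta> * (c * r^n)"
      using cpos r k by (simp add: norm_mult norm_power)
    also have "\<dots> \<le> c * r^n" using b cpos r k by (simp add: mult_left_le_one_le)
    also have "c * r^n = ((R+k)*r/(k+r))^n" unfolding c_def by (simp add: power_mult_distrib power_divide)
    also have "\<dots> < R^n"
    proof (rule power_strict_mono)
      have "(R+k)*r < R*(k+r)" using k R r by (simp add: algebra_simps)
      thus "(R+k)*r/(k+r) < R" using k r by (simp add: divide_less_eq)
      show "0 \<le> (R+k)*r/(k+r)" using k r R by simp
      show "0 < n" using n by simp
    qed
    also have "R^n = cmod (complex_of_real R ^ n)" using R r k by (simp add: norm_power)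
    finally show ?thesis .
  qed
  hence "complex_of_real R ^ n + \<beta> * complex_of_real c * complex_of_real r ^ n \<noteq> 0"
    by (metis add_eq_0_iff norm_minus_cancel order_less_irrefl)
  hence "coeff (Gop R r (\<beta> * complex_of_real c) H) n \<noteq> 0" using co H0 by simp
  hence "degree (Gop R r (\<beta> * complex_of_real c) H) \<ge> n" by (rule le_degree)
  thus ?thesis using dle nz unfolding c_def by simp
qed

lemma no_interior_max:
  fixes A C :: "complex poly" and u0 :: complex and \<delta> :: real
  assumes C0: "poly C u0 \<noteq> 0" and A0: "poly A u0 \<noteq> 0"
    and e0: "smult (poly A u0 / poly C u0) C - A \<noteq> 0" and d: "\<delta> > 0"
  shows "\<exists>u. cmod (u - u0) < \<delta> \<and> cmod (poly A u) > cmod (poly A u0 / poly C u0) * cmod (poly C u)"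
proof -
  define c0 where "c0 = poly A u0 / poly C u0"
  define V where "V = smult c0 C"
  define e where "e = V - A"
  have V0: "poly V u0 = poly A u0" unfolding V_def c0_def using C0 by simp
  have enz: "e \<noteq> 0" using e0 unfolding e_def V_def c0_def .
  have eu0: "poly e u0 = 0" unfolding e_def using V0 by simp
  define m where "m = order u0 e"
  have m0: "m \<noteq> 0" using order_root[of e u0] eu0 enz unfolding m_def by simp
  obtain e1 where ee1: "e = [:-u0,1:]^m * e1" and nd: "\<not> [:-u0,1:] dvd e1"
    using order_decomp[OF enz] unfolding m_def by blast
  have e1u0: "poly e1 u0 \<noteq> 0" using nd poly_eq_0_iff_dvd by blast
  obtain \<eta> where eta: "- poly A u0 / poly e1 u0 = \<eta> ^ m" using exists_complex_root[OF m0] by blast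
  have eta0: "\<eta> \<noteq> 0"
  proof
    assume "\<eta> = 0"
    hence "- poly A u0 / poly e1 u0 = 0" using eta m0 by simp
    thus False using A0 e1u0 by simp
  qed
  define g where "g t = (poly e1 (u0 + of_real t * \<eta>) / poly e1 u0) * (poly A u0 / poly V (u0 + of_real t * \<eta>))" for t :: real
  have contg: "continuous (at 0) g" unfolding g_def using V0 A0 e1u0
    by (intro continuous_intros) auto
  have g0: "g 0 = 1" unfolding g_def using V0 A0 e1u0 by simp
  have tg: "(g \<longlongrightarrow> 1) (at_right 0)"
    using contg g0 unfolding continuous_at by (metis tendsto_mono at_le subset_UNIV)
  have ev1: "\<forall>\<^sub>F t in at_right 0. Re (g t) > 0"
  proof -
    have "((\<lambda>t. Re (g t)) \<longlongrightarrow> Re 1) (at_right 0)" by (intro tendsto_intros tg)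
    thus ?thesis by (rule order_tendstoD) simp
  qed
  have contV: "continuous (at 0) (\<lambda>t::real. poly V (u0 + of_real t * \<eta>))"
    by (intro continuous_intros)
  have ev2: "\<forall>\<^sub>F t in at_right 0. poly V (u0 + of_real t * \<eta>) \<noteq> 0"
  proof -
    have "((\<lambda>t::real. poly V (u0 + of_real t * \<eta>)) \<longlongrightarrow> poly A u0) (at_right 0)"
      using contV V0 unfolding continuous_at by (metis (no_types, lifting) tendsto_mono at_le subset_UNIV add.right_neutral mult_zero_left of_real_0)
    thus ?thesis using A0 by (rule tendsto_imp_eventually_ne)
  qed
  have ev3: "\<forall>\<^sub>F t in at_right 0. t < \<delta> / cmod \<eta>"
  proof -
    have "((\<lambda>t::real. t) \<longlongrightarrow> 0) (at_right 0)" by (rule tendsto_ident_at)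
    moreover have "0 < \<delta> / cmod \<eta>" using d eta0 by simp
    ultimately show ?thesis by (rule order_tendstoD)
  qed
  have ev4: "\<forall>\<^sub>F t in at_right 0. (0::real) < t" by (rule eventually_at_right_less)
  have "\<forall>\<^sub>F t in at_right 0. Re (g t) > 0 \<and> poly V (u0 + of_real t * \<eta>) \<noteq> 0 \<and> t < \<delta> / cmod \<eta> \<and> 0 < t"
    by (intro eventually_conj ev1 ev2 ev3 ev4)
  then obtain t where t1: "Re (g t) > 0" and t2: "poly V (u0 + of_real t * \<eta>) \<noteq> 0"
    and t3: "t < \<delta> / cmod \<eta>" and t4: "0 < t"
    using eventually_happens'[OF trivial_limit_at_right_real] by blast
  define u where "u = u0 + of_real t * \<eta>"
  have "cmod (u - u0) = t * cmod \<eta>" unfolding u_def using t4 by (simp add: norm_mult)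
  also have "\<dots> < \<delta>" using t3 eta0 by (simp add: pos_less_divide_eq)
  finally have ud: "cmod (u - u0) < \<delta>" .
  have eu: "poly e u = - (of_real t ^ m * g t * poly V u)"
  proof -
    have "poly e u = (of_real t * \<eta>)^m * poly e1 u" unfolding ee1 u_def by (simp add: poly_power)
    also have "\<dots> = of_real t ^ m * \<eta>^m * poly e1 u" by (simp add: power_mult_distrib)
    also have "\<dots> = - (of_real t ^ m * g t * poly V u)"
      unfolding eta[symmetric] g_def u_def[symmetric] using t2 e1u0 unfolding u_def[symmetric]
      by (simp add: field_simps)
    finally show ?thesis .
  qed
  have Au: "poly A u = poly V u * (1 + of_real t ^ m * g t)"
  proof -
    have "poly A u = poly V u - poly e u" unfolding e_def by simp
    thus ?thesis unfolding eu by (simp add: algebra_simps)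
  qed
  have "Re (1 + of_real t ^ m * g t) = 1 + t^m * Re (g t)"
  proof -
    have p: "(complex_of_real t) ^ m = complex_of_real (t ^ m)" by simp
    show ?thesis unfolding p by simp
  qed
  also have "\<dots> > 1" using t1 t4 by simp
  finally have "cmod (1 + of_real t ^ m * g t) > 1" using complex_Re_le_cmod less_le_trans by blast
  moreover have "poly V u \<noteq> 0" using t2 unfolding u_def .
  ultimately have "cmod (poly A u) > cmod (poly V u)" unfolding Au norm_mult by simp
  moreover have "cmod (poly V u) = cmod c0 * cmod (poly C u)" unfolding V_def by (simp add: norm_mult)
  ultimately show ?thesis using ud unfolding c0_def by auto
qed

lemma max_mod_ratio:
  fixes A C :: "complex poly"
  assumes C: "\<forall>u. cmod u \<le> 1 \<longrightarrow> poly C u \<noteq> 0"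
    and B: "\<forall>u. cmod u = 1 \<longrightarrow> cmod (poly A u) \<le> cmod (poly C u)"
    and u1: "cmod u1 \<le> 1"
  shows "cmod (poly A u1) \<le> cmod (poly C u1)"
proof (rule ccontr)
  assume "\<not> cmod (poly A u1) \<le> cmod (poly C u1)"
  hence lt1: "cmod (poly A u1) > cmod (poly C u1)" by simp
  define \<phi> where "\<phi> u = cmod (poly A u / poly C u)" for u
  define S where "S = cball (0::complex) 1"
  have S: "u \<in> S \<longleftrightarrow> cmod u \<le> 1" for u unfolding S_def by (simp add: dist_norm)
  have cont: "continuous_on S \<phi>" unfolding \<phi>_def
    by (intro continuous_intros) (use C S in auto)
  obtain u0 where u0S: "u0 \<in> S" and mx: "\<forall>y\<in>S. \<phi> y \<le> \<phi> u0"
    using continuous_attains_sup[OF _ _ cont] unfolding S_def by auto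
  have Cu1: "poly C u1 \<noteq> 0" using C u1 by blast
  have "\<phi> u1 > 1" unfolding \<phi>_def using lt1 Cu1 by (simp add: norm_divide)
  moreover have "\<phi> u1 \<le> \<phi> u0" using mx u1 S by blast
  ultimately have big: "\<phi> u0 > 1" by linarith
  have Cu0: "poly C u0 \<noteq> 0" using C u0S S by blast
  have inner: "cmod u0 < 1"
  proof (rule ccontr)
    assume "\<not> cmod u0 < 1"
    hence "cmod u0 = 1" using u0S S by simp
    hence "\<phi> u0 \<le> 1" unfolding \<phi>_def using B Cu0 by (simp add: norm_divide)
    thus False using big by simp
  qed
  have Au0: "poly A u0 \<noteq> 0" using big unfolding \<phi>_def by auto
  define c0 where "c0 = poly A u0 / poly C u0"
  have phic: "\<phi> u0 = cmod c0" unfolding \<phi>_def c0_def ..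
  show False
  proof (cases "smult c0 C - A = 0")
    case True
    hence AC: "A = smult c0 C" by simp
    have C1: "poly C 1 \<noteq> 0" using C by simp
    have "cmod c0 * cmod (poly C 1) \<le> 1 * cmod (poly C 1)" using B AC by (simp add: norm_mult)
    hence "cmod c0 \<le> 1" using C1 by (simp add: mult_le_cancel_right)
    thus False using big phic by simp
  next
    case False
    have "1 - cmod u0 > 0" using inner by simp
    from no_interior_max[OF Cu0 Au0 False[unfolded c0_def] this]
    obtain u where ud: "cmod (u - u0) < 1 - cmod u0"
      and gt: "cmod (poly A u) > cmod c0 * cmod (poly C u)" unfolding c0_def by blast
    have "cmod u \<le> cmod u0 + cmod (u - u0)" by (metis norm_triangle_sub add.commute)
    hence uS: "u \<in> S" using ud S by simp
    hence Cu: "poly C u \<noteq> 0" using C S by blast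
    have "\<phi> u > cmod c0" unfolding \<phi>_def using gt Cu by (simp add: norm_divide pos_less_divide_eq)
    moreover have "\<phi> u \<le> \<phi> u0" using mx uS by blast
    ultimately show False using phic by linarith
  qed
qed

definition revp :: "nat \<Rightarrow> real \<Rightarrow> complex poly \<Rightarrow> complex poly" where
  "revp m k P = (\<Sum>j\<le>m. monom (coeff P j * complex_of_real k ^ j) (m - j))"

lemma poly_revp:
  assumes d: "degree P \<le> m" and u: "u \<noteq> 0"
  shows "poly (revp m k P) u = u^m * poly P (complex_of_real k / u)"
proof -
  have "poly P (complex_of_real k / u) = (\<Sum>j\<le>m. coeff P j * (complex_of_real k / u)^j)"
  proof -
    have "poly P (complex_of_real k / u) = (\<Sum>j\<le>degree P. coeff P j * (complex_of_real k / u)^j)"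
      by (rule poly_altdef)
    also have "\<dots> = (\<Sum>j\<le>m. coeff P j * (complex_of_real k / u)^j)"
      by (rule sum.mono_neutral_left) (use d in \<open>auto simp: coeff_eq_0\<close>)
    finally show ?thesis .
  qed
  hence "u^m * poly P (complex_of_real k / u) = (\<Sum>j\<le>m. coeff P j * (u^m * (complex_of_real k / u)^j))"
    by (simp add: sum_distrib_left algebra_simps)
  also have "\<dots> = (\<Sum>j\<le>m. coeff P j * complex_of_real k ^ j * u ^ (m - j))"
  proof (rule sum.cong)
    fix j assume "j \<in> {..m}"
    hence "m = (m - j) + j" by simp
    hence "u^m = u^(m-j) * u^j" by (metis power_add)
    thus "coeff P j * (u^m * (complex_of_real k / u)^j) = coeff P j * complex_of_real k ^ j * u ^ (m - j)"
      using u by (simp add: power_divide field_simps)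
  qed simp
  finally show ?thesis unfolding revp_def by (simp add: poly_sum poly_monom)
qed

lemma poly_revp0: "poly (revp m k P) 0 = coeff P m * complex_of_real k ^ m"
proof -
  have "poly (revp m k P) 0 = (\<Sum>j<Suc m. coeff P j * complex_of_real k ^ j * 0 ^ (m - j))"
    unfolding revp_def by (simp add: poly_sum poly_monom lessThan_Suc_atMost)
  also have "\<dots> = (\<Sum>j<m. coeff P j * complex_of_real k ^ j * 0 ^ (m - j)) + coeff P m * complex_of_real k ^ m"
    by simp
  also have "(\<Sum>j<m. coeff P j * complex_of_real k ^ j * 0 ^ (m - j)) = 0"
    by (rule sum.neutral) auto
  finally show ?thesis by simp
qed

lemma M_noboundary:
  fixes k :: real
  assumes k: "k > 0" and dF: "degree F = m" and F0: "F \<noteq> 0"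
    and rF: "\<forall>w. poly F w = 0 \<longrightarrow> cmod w < k" and dP: "degree P \<le> m"
    and circ: "\<forall>z. cmod z = k \<longrightarrow> cmod (poly P z) \<le> cmod (poly F z)"
  shows "(\<forall>z. cmod z > k \<longrightarrow> cmod (poly P z) \<le> cmod (poly F z)) \<and> cmod (coeff P m) \<le> cmod (coeff F m)"
proof -
  define Ar where "Ar = revp m k P"
  define Cr where "Cr = revp m k F"
  have kc: "complex_of_real k \<noteq> 0" using k by simp
  have nk: "cmod (complex_of_real k / u) = k / cmod u" if "u \<noteq> 0" for u
    using k by (simp add: norm_divide)
  have Cnz: "\<forall>u. cmod u \<le> 1 \<longrightarrow> poly Cr u \<noteq> 0"
  proof (intro allI impI)
    fix u :: complex assume u: "cmod u \<le> 1"
    show "poly Cr u \<noteq> 0"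
    proof (cases "u = 0")
      case True
      have "coeff F m \<noteq> 0" using dF F0 leading_coeff_0_iff by blast
      thus ?thesis unfolding Cr_def using poly_revp0[of m k F] True kc by simp
    next
      case False
      have "k \<le> k / cmod u" using k u False by (simp add: le_divide_eq)
      hence "\<not> cmod (complex_of_real k / u) < k" using nk[OF False] by simp
      hence "poly F (complex_of_real k / u) \<noteq> 0" using rF by blast
      thus ?thesis unfolding Cr_def using poly_revp[of F m u k] dF False by simp
    qed
  qed
  have Bd: "\<forall>u. cmod u = 1 \<longrightarrow> cmod (poly Ar u) \<le> cmod (poly Cr u)"
  proof (intro allI impI)
    fix u :: complex assume u: "cmod u = 1"
    hence u0: "u \<noteq> 0" by auto
    have "cmod (complex_of_real k / u) = k" using nk[OF u0] u by simp
    hence "cmod (poly P (complex_of_real k / u)) \<le> cmod (poly F (complex_of_real k / u))" using circ by blast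
    thus "cmod (poly Ar u) \<le> cmod (poly Cr u)" unfolding Ar_def Cr_def
      using poly_revp[OF dP u0] poly_revp[of F m u k] dF u0 u by (simp add: norm_mult norm_power)
  qed
  note MM = max_mod_ratio[OF Cnz Bd]
  have part1: "cmod (poly P z) \<le> cmod (poly F z)" if z: "cmod z > k" for z
  proof -
    define u where "u = complex_of_real k / z"
    have z0: "z \<noteq> 0" using z k by auto
    have u0: "u \<noteq> 0" unfolding u_def using z0 kc by simp
    have ku: "complex_of_real k / u = z" unfolding u_def using z0 kc by simp
    have "k / cmod z < 1" using z k by (simp add: divide_less_eq)
    hence "cmod u < 1" unfolding u_def using k by (simp add: norm_divide)
    hence "cmod (poly Ar u) \<le> cmod (poly Cr u)" using MM by simp
    hence "cmod u ^ m * cmod (poly P z) \<le> cmod u ^ m * cmod (poly F z)"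
      unfolding Ar_def Cr_def using poly_revp[OF dP u0] poly_revp[of F m u k] dF u0 ku
      by (simp add: norm_mult norm_power)
    moreover have "cmod u ^ m > 0" using u0 by simp
    ultimately show ?thesis by (simp add: mult_le_cancel_left)
  qed
  have "cmod (poly Ar 0) \<le> cmod (poly Cr 0)" using MM by simp
  hence "cmod (coeff P m) * k^m \<le> cmod (coeff F m) * k^m"
    unfolding Ar_def Cr_def poly_revp0 using k by (simp add: norm_mult norm_power)
  hence "cmod (coeff P m) \<le> cmod (coeff F m)" using k by (simp add: mult_le_cancel_right)
  thus ?thesis using part1 by blast
qed

lemma circle_limit:
  fixes p q :: "complex poly" and w :: complex and k :: real
  assumes w: "cmod w = k" and k: "k > 0"
    and H: "\<forall>z. cmod z = k \<longrightarrow> z \<noteq> w \<longrightarrow> cmod (poly p z) \<le> cmod (poly q z)"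
  shows "cmod (poly p w) \<le> cmod (poly q w)"
proof -
  define t where "t j = inverse (real (Suc j))" for j
  define s where "s j = w * exp (\<i> * complex_of_real (t j))" for j
  have tl: "t \<longlonglongrightarrow> 0" unfolding t_def by (rule LIMSEQ_inverse_real_of_nat)
  have sl: "s \<longlonglongrightarrow> w"
  proof -
    have "(\<lambda>j. w * exp (\<i> * complex_of_real (t j))) \<longlonglongrightarrow> w * exp (\<i> * complex_of_real 0)"
      by (intro tendsto_intros tl)
    thus ?thesis unfolding s_def by simp
  qed
  have sk: "cmod (s j) = k" for j unfolding s_def using w by (simp add: norm_mult)
  have sw: "s j \<noteq> w" for j
  proof
    assume "s j = w"
    hence "exp (\<i> * complex_of_real (t j)) = 1" unfolding s_def using w k by auto
    hence "Im (exp (\<i> * complex_of_real (t j))) = 0" by simp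
    moreover have "sin (t j) > 0"
    proof (rule sin_gt_zero)
      show "0 < t j" unfolding t_def by simp
      have "t j \<le> 1" unfolding t_def by (simp add: inverse_le_1_iff)
      also have "1 < pi" using pi_gt3 by simp
      finally show "t j < pi" .
    qed
    ultimately show False by (simp add: Im_exp)
  qed
  have l1: "(\<lambda>j. cmod (poly p (s j))) \<longlonglongrightarrow> cmod (poly p w)"
    by (rule isCont_tendsto_compose[OF _ sl]) (intro continuous_intros)
  have l2: "(\<lambda>j. cmod (poly q (s j))) \<longlonglongrightarrow> cmod (poly q w)"
    by (rule isCont_tendsto_compose[OF _ sl]) (intro continuous_intros)
  show ?thesis
    by (rule tendsto_le[OF _ l2 l1]) (use H sk sw in auto)
qed

lemma coeff_linfac:
  fixes q :: "complex poly"
  assumes "degree q \<le> m - 1" "m \<ge> 1"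
  shows "coeff ([:-w,1:] * q) m = coeff q (m - 1)"
proof -
  obtain m' where m': "m = Suc m'" using assms(2) by (cases m) auto
  have "coeff q m = 0" using assms by (simp add: coeff_eq_0)
  thus ?thesis using m' by (simp add: coeff_pCons)
qed

lemma M_lemma:
  fixes k :: real
  assumes k: "k > 0"
  shows "degree F = m \<Longrightarrow> F \<noteq> 0 \<Longrightarrow> (\<forall>w. poly F w = 0 \<longrightarrow> cmod w \<le> k) \<Longrightarrow> degree P \<le> m \<Longrightarrow>
    (\<forall>z. cmod z = k \<longrightarrow> cmod (poly P z) \<le> cmod (poly F z)) \<Longrightarrow>
    (\<forall>z. cmod z > k \<longrightarrow> cmod (poly P z) \<le> cmod (poly F z)) \<and> cmod (coeff P m) \<le> cmod (coeff F m)"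
proof (induction m arbitrary: F P rule: less_induct)
  case (less m F P)
  show ?case
  proof (cases "\<exists>w. poly F w = 0 \<and> cmod w = k")
    case False
    have "\<forall>w. poly F w = 0 \<longrightarrow> cmod w < k" using False less.prems(3) by force
    thus ?thesis using M_noboundary[OF k less.prems(1,2) _ less.prems(4,5)] by blast
  next
    case True
    then obtain w where w0: "poly F w = 0" and wk: "cmod w = k" by blast
    have Pw: "poly P w = 0" using less.prems(5) wk w0 by fastforce
    obtain F1 where fF: "F = [:-w,1:] * F1" using w0 poly_eq_0_iff_dvd by (metis dvdE)
    obtain P1 where fP: "P = [:-w,1:] * P1" using Pw poly_eq_0_iff_dvd by (metis dvdE)
    have F10: "F1 \<noteq> 0" using less.prems(2) fF by auto
    have "degree F = degree [:-w,1:] + degree F1" unfolding fF by (rule degree_mult_eq) (use F10 in auto)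
    hence dF1: "degree F1 = m - 1" and m1: "m \<ge> 1" using less.prems(1) by auto
    have dP1: "degree P1 \<le> m - 1"
    proof (cases "P1 = 0")
      case False
      have "degree P = degree [:-w,1:] + degree P1" unfolding fP by (rule degree_mult_eq) (use False in auto)
      thus ?thesis using less.prems(4) by simp
    qed simp
    have rF1: "\<forall>x. poly F1 x = 0 \<longrightarrow> cmod x \<le> k" using less.prems(3) fF by auto
    have c1: "\<forall>z. cmod z = k \<longrightarrow> z \<noteq> w \<longrightarrow> cmod (poly P1 z) \<le> cmod (poly F1 z)"
    proof (intro allI impI)
      fix z assume z: "cmod z = k" "z \<noteq> w"
      have e1: "poly P z = (z - w) * poly P1 z" by (simp add: fP algebra_simps)
      have e2: "poly F z = (z - w) * poly F1 z" by (simp add: fF algebra_simps)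
      have "cmod (poly P z) \<le> cmod (poly F z)" using less.prems(5) z(1) by blast
      hence "cmod (z - w) * cmod (poly P1 z) \<le> cmod (z - w) * cmod (poly F1 z)"
        unfolding e1 e2 norm_mult .
      moreover have "cmod (z - w) > 0" using z by simp
      ultimately show "cmod (poly P1 z) \<le> cmod (poly F1 z)" by (simp add: mult_le_cancel_left)
    qed
    have c2: "\<forall>z. cmod z = k \<longrightarrow> cmod (poly P1 z) \<le> cmod (poly F1 z)"
      using c1 circle_limit[OF wk k c1] by blast
    have "m - 1 < m" using m1 by simp
    note IH = less.IH[OF this dF1 F10 rF1 dP1 c2]
    have "cmod (poly P z) \<le> cmod (poly F z)" if "cmod z > k" for z
    proof -
      have "cmod (poly P1 z) \<le> cmod (poly F1 z)" using IH that by blast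
      hence "cmod (z - w) * cmod (poly P1 z) \<le> cmod (z - w) * cmod (poly F1 z)"
        by (simp add: mult_left_mono)
      moreover have "poly P z = (z - w) * poly P1 z" by (simp add: fP algebra_simps)
      moreover have "poly F z = (z - w) * poly F1 z" by (simp add: fF algebra_simps)
      ultimately show ?thesis by (simp add: norm_mult)
    qed
    moreover have "coeff P m = coeff P1 (m-1)" unfolding fP by (rule coeff_linfac[OF dP1 m1])
    moreover have "coeff F m = coeff F1 (m-1)" unfolding fF using dF1 m1 by (intro coeff_linfac) auto
    ultimately show ?thesis using IH by simp
  qed
qed

lemma B_add_smult: "B_op n l0 l1 l2 (p + smult c q) z = B_op n l0 l1 l2 p z + c * B_op n l0 l1 l2 q z"
  unfolding B_op_def by (simp add: pderiv_add pderiv_smult algebra_simps)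

lemma B_smult: "B_op n l0 l1 l2 (smult c q) z = c * B_op n l0 l1 l2 q z"
  unfolding B_op_def by (simp add: pderiv_smult algebra_simps)

lemma B_diff_smult: "B_op n l0 l1 l2 (p - smult c q) z = B_op n l0 l1 l2 p z - c * B_op n l0 l1 l2 q z"
  unfolding B_op_def by (simp add: pderiv_diff pderiv_smult field_simps)

lemma B_G: "B_op n l0 l1 l2 (Gop R r bc P) z = B_op n l0 l1 l2 (P \<circ>\<^sub>p [:0, complex_of_real R:]) z
    + bc * B_op n l0 l1 l2 (P \<circ>\<^sub>p [:0, complex_of_real r:]) z"
  unfolding Gop_def by (rule B_add_smult)

lemma Gop_diff: "Gop R r bc (P - smult c F) = Gop R r bc P - smult c (Gop R r bc F)"
  unfolding Gop_def
  by (rule poly_eq_poly_eq_iff[THEN iffD1], rule ext) (simp add: poly_pcompose algebra_simps)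

lemma main_gt:
  fixes n :: nat and k :: real and F P :: "complex poly" and l0 l1 l2 :: complex
  assumes n: "n \<ge> 1"
    and k: "k > 0"
    and U: "\<forall>z. U_poly n l0 l1 l2 z = 0 \<longrightarrow> cmod z \<le> cmod (z - of_nat n / 2)"
    and degF: "degree F = n"
    and zerosF: "\<forall>z. poly F z = 0 \<longrightarrow> cmod z \<le> k"
    and degP: "degree P \<le> n"
    and PF: "\<forall>z. cmod z = k \<longrightarrow> cmod (poly P z) \<le> cmod (poly F z)"
    and b: "cmod \<beta> \<le> 1" and R: "R > r" and r: "r \<ge> k" and z: "cmod z > 1"
  shows "cmod (B_op n l0 l1 l2 (Gop R r (\<beta> * complex_of_real (((R+k)/(k+r))^n)) P) z)
       \<le> cmod (B_op n l0 l1 l2 (Gop R r (\<beta> * complex_of_real (((R+k)/(k+r))^n)) F) z)"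
proof (rule ccontr)
  define bc where "bc = \<beta> * complex_of_real (((R+k)/(k+r))^n)"
  define BP where "BP = B_op n l0 l1 l2 (Gop R r bc P) z"
  define BF where "BF = B_op n l0 l1 l2 (Gop R r bc F) z"
  assume "\<not> ?thesis"
  hence gt: "cmod BP > cmod BF" unfolding BP_def BF_def bc_def by simp
  have F0: "F \<noteq> 0" using degF n by auto
  note GF = G_lemma[OF k r R b n degF zerosF]
  have BF0: "BF \<noteq> 0" unfolding BF_def bc_def
    using B_nonzero[OF n U] GF z by (meson not_le)
  define lm where "lm = BP / BF"
  have lam: "cmod lm > 1" unfolding lm_def using gt BF0 by (simp add: norm_divide)
  note M = M_lemma[OF k degF F0 zerosF degP PF]
  define H where "H = P - smult lm F"
  have cH: "coeff H n \<noteq> 0"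
  proof
    assume "coeff H n = 0"
    hence "coeff P n = lm * coeff F n" unfolding H_def by simp
    hence "cmod (coeff P n) = cmod lm * cmod (coeff F n)" by (simp add: norm_mult)
    moreover have "coeff F n \<noteq> 0" using degF F0 leading_coeff_0_iff by blast
    hence "cmod lm * cmod (coeff F n) > cmod (coeff F n)" using lam by simp
    ultimately show False using M by simp
  qed
  have dH: "degree H = n"
  proof -
    have "degree H \<le> n" unfolding H_def using degP degF by (simp add: degree_diff_le)
    moreover have "degree H \<ge> n" using cH by (rule le_degree)
    ultimately show ?thesis by simp
  qed
  have rH: "\<forall>w. poly H w = 0 \<longrightarrow> cmod w \<le> k"
  proof (intro allI impI)
    fix w assume Hw: "poly H w = 0"
    show "cmod w \<le> k"
    proof (rule ccontr)
      assume "\<not> cmod w \<le> k"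
      hence wk: "cmod w > k" by simp
      hence Fw: "poly F w \<noteq> 0" using zerosF by force
      have "cmod (poly P w) \<le> cmod (poly F w)" using M wk by blast
      also have "\<dots> < cmod lm * cmod (poly F w)" using lam Fw by simp
      finally have "cmod (poly P w) \<noteq> cmod (lm * poly F w)" by (simp add: norm_mult)
      moreover have "poly P w = lm * poly F w" using Hw unfolding H_def by simp
      ultimately show False by simp
    qed
  qed
  note GH = G_lemma[OF k r R b n dH rH]
  have "B_op n l0 l1 l2 (Gop R r bc H) z \<noteq> 0" unfolding bc_def
    using B_nonzero[OF n U] GH z by (meson not_le)
  moreover have "B_op n l0 l1 l2 (Gop R r bc H) z = BP - lm * BF"
    unfolding H_def Gop_diff B_diff_smult BP_def BF_def ..
  moreover have "BP - lm * BF = 0" unfolding lm_def using BF0 by simp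
  ultimately show False by simp
qed

theorem corollary2p2:
  fixes n :: nat and k :: real and F P :: "complex poly" and l0 l1 l2 :: complex
  assumes n: "n \<ge> 1"
    and k: "k > 0"
    and U: "\<forall>z. U_poly n l0 l1 l2 z = 0 \<longrightarrow> cmod z \<le> cmod (z - of_nat n / 2)"
    and degF: "degree F = n"
    and zerosF: "\<forall>z. poly F z = 0 \<longrightarrow> cmod z \<le> k"
    and degP: "degree P \<le> n"
    and PF: "\<forall>z. cmod z = k \<longrightarrow> cmod (poly P z) \<le> cmod (poly F z)"
  shows "(\<forall>\<beta> :: complex. \<forall>R r :: real. \<forall>z :: complex.
            cmod \<beta> \<le> 1 \<longrightarrow> R > r \<longrightarrow> r \<ge> k \<longrightarrow> cmod z \<ge> 1 \<longrightarrow>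
            cmod (B_op n l0 l1 l2 (P \<circ>\<^sub>p [:0, complex_of_real R:]) z
                  + \<beta> * complex_of_real (((R + k) / (k + r)) ^ n)
                      * B_op n l0 l1 l2 (P \<circ>\<^sub>p [:0, complex_of_real r:]) z)
            \<le> cmod (B_op n l0 l1 l2 (F \<circ>\<^sub>p [:0, complex_of_real R:]) z
                  + \<beta> * complex_of_real (((R + k) / (k + r)) ^ n)
                      * B_op n l0 l1 l2 (F \<circ>\<^sub>p [:0, complex_of_real r:]) z))
         \<and> (\<forall>\<gamma> :: real. \<forall>\<beta> :: complex. \<forall>R r :: real. \<forall>z :: complex.
            let Q = smult (exp (\<i> * complex_of_real \<gamma>)) F in
            cmod \<beta> \<le> 1 \<longrightarrow> R > r \<longrightarrow> r \<ge> k \<longrightarrow> cmod z \<ge> 1 \<longrightarrow>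
            cmod (B_op n l0 l1 l2 (Q \<circ>\<^sub>p [:0, complex_of_real R:]) z
                  + \<beta> * complex_of_real (((R + k) / (k + r)) ^ n)
                      * B_op n l0 l1 l2 (Q \<circ>\<^sub>p [:0, complex_of_real r:]) z)
            = cmod (B_op n l0 l1 l2 (F \<circ>\<^sub>p [:0, complex_of_real R:]) z
                  + \<beta> * complex_of_real (((R + k) / (k + r)) ^ n)
                      * B_op n l0 l1 l2 (F \<circ>\<^sub>p [:0, complex_of_real r:]) z))"

proof -
  have part1: "cmod (B_op n l0 l1 l2 (P \<circ>\<^sub>p [:0, complex_of_real R:]) z
                  + \<beta> * complex_of_real (((R + k) / (k + r)) ^ n)
                      * B_op n l0 l1 l2 (P \<circ>\<^sub>p [:0, complex_of_real r:]) z)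
            \<le> cmod (B_op n l0 l1 l2 (F \<circ>\<^sub>p [:0, complex_of_real R:]) z
                  + \<beta> * complex_of_real (((R + k) / (k + r)) ^ n)
                      * B_op n l0 l1 l2 (F \<circ>\<^sub>p [:0, complex_of_real r:]) z)"
    if b: "cmod \<beta> \<le> 1" and Rr: "R > r" and rk: "r \<ge> k" and z1: "cmod z \<ge> 1" for \<beta> R r z
  proof -
    define bc where "bc = \<beta> * complex_of_real (((R + k) / (k + r)) ^ n)"
    define fP where "fP w = cmod (B_op n l0 l1 l2 (Gop R r bc P) w)" for w
    define fF where "fF w = cmod (B_op n l0 l1 l2 (Gop R r bc F) w)" for w
    have gt: "fP w \<le> fF w" if "cmod w > 1" for w
      unfolding fP_def fF_def bc_def using main_gt[OF n k U degF zerosF degP PF b Rr rk that] .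
    define s where "s j = complex_of_real (1 + inverse (real (Suc j))) * z" for j
    have sl: "s \<longlonglongrightarrow> z"
    proof -
      have "(\<lambda>j. complex_of_real (1 + inverse (real (Suc j))) * z) \<longlonglongrightarrow> complex_of_real (1 + 0) * z"
        by (intro tendsto_intros LIMSEQ_inverse_real_of_nat)
      thus ?thesis unfolding s_def by simp
    qed
    have s1: "cmod (s j) > 1" for j
    proof -
      have pos: "1 + inverse (real (Suc j)) > 0" by (simp add: add_pos_pos)
      have "cmod (s j) = \<bar>1 + inverse (real (Suc j))\<bar> * cmod z" unfolding s_def
        by (simp only: norm_mult norm_of_real)
      also have "\<dots> = (1 + inverse (real (Suc j))) * cmod z" using pos by simp
      also have "\<dots> \<ge> (1 + inverse (real (Suc j))) * 1" using z1 pos by (intro mult_left_mono) auto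
      finally have "cmod (s j) \<ge> 1 + inverse (real (Suc j))" by simp
      moreover have "inverse (real (Suc j)) > 0" by simp
      ultimately show ?thesis by linarith
    qed
    have cP: "isCont fP z" unfolding fP_def B_op_def by (intro continuous_intros) auto
    have cF: "isCont fF z" unfolding fF_def B_op_def by (intro continuous_intros) auto
    have "fP z \<le> fF z"
      by (rule tendsto_le[OF _ isCont_tendsto_compose[OF cF sl] isCont_tendsto_compose[OF cP sl]])
         (use gt s1 in auto)
    thus ?thesis unfolding fP_def fF_def B_G bc_def .
  qed
  have part2: "cmod (B_op n l0 l1 l2 (smult e F \<circ>\<^sub>p [:0, complex_of_real R:]) z
                  + \<beta> * c * B_op n l0 l1 l2 (smult e F \<circ>\<^sub>p [:0, complex_of_real r:]) z)
            = cmod (B_op n l0 l1 l2 (F \<circ>\<^sub>p [:0, complex_of_real R:]) z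
                  + \<beta> * c * B_op n l0 l1 l2 (F \<circ>\<^sub>p [:0, complex_of_real r:]) z)"
    if e: "cmod e = 1" for e \<beta> c R r z
  proof -
    have "B_op n l0 l1 l2 (smult e F \<circ>\<^sub>p [:0, complex_of_real R:]) z
                  + \<beta> * c * B_op n l0 l1 l2 (smult e F \<circ>\<^sub>p [:0, complex_of_real r:]) z
        = e * (B_op n l0 l1 l2 (F \<circ>\<^sub>p [:0, complex_of_real R:]) z
                  + \<beta> * c * B_op n l0 l1 l2 (F \<circ>\<^sub>p [:0, complex_of_real r:]) z)"
      unfolding pcompose_smult B_smult by (simp add: algebra_simps)
    thus ?thesis using e by (simp add: norm_mult)
  qed
  have en: "cmod (exp (\<i> * complex_of_real \<gamma>)) = 1" for \<gamma> by (simp add: norm_exp_i_times)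
  show ?thesis unfolding Let_def
  proof (intro conjI allI impI)
    fix \<beta> :: complex and R r :: real and z :: complex
    assume "cmod \<beta> \<le> 1" "R > r" "r \<ge> k" "cmod z \<ge> 1"
    thus "cmod (B_op n l0 l1 l2 (P \<circ>\<^sub>p [:0, complex_of_real R:]) z
                  + \<beta> * complex_of_real (((R + k) / (k + r)) ^ n)
                      * B_op n l0 l1 l2 (P \<circ>\<^sub>p [:0, complex_of_real r:]) z)
            \<le> cmod (B_op n l0 l1 l2 (F \<circ>\<^sub>p [:0, complex_of_real R:]) z
                  + \<beta> * complex_of_real (((R + k) / (k + r)) ^ n)
                      * B_op n l0 l1 l2 (F \<circ>\<^sub>p [:0, complex_of_real r:]) z)"
      by (rule part1)
  next
    fix \<gamma> :: real and \<beta> :: complex and R r :: real and z :: complex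
    show "cmod (B_op n l0 l1 l2 (smult (exp (\<i> * complex_of_real \<gamma>)) F \<circ>\<^sub>p [:0, complex_of_real R:]) z
                  + \<beta> * complex_of_real (((R + k) / (k + r)) ^ n)
                      * B_op n l0 l1 l2 (smult (exp (\<i> * complex_of_real \<gamma>)) F \<circ>\<^sub>p [:0, complex_of_real r:]) z)
            = cmod (B_op n l0 l1 l2 (F \<circ>\<^sub>p [:0, complex_of_real R:]) z
                  + \<beta> * complex_of_real (((R + k) / (k + r)) ^ n)
                      * B_op n l0 l1 l2 (F \<circ>\<^sub>p [:0, complex_of_real r:]) z)"
      by (rule part2[OF en])
  qed
qed

end
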